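(* For every integer $T\ge 5$ and every $\sigma\in\mathfrak S_3$, the vector $\sigma c$ with $c=[T,\,T,\,-(T-2),\,1,\,-(T-2),\,1]$ defines a facet of $P^T$.
   Context: For an integer $T\ge 2$, let $\Omega_T$ be the set of words $w=s_1s_2\cdots s_T$ over $\{1,2,3\}$ with $s_l\neq s_{l+1}$ for $l=1,\dots,T-1$. For $w\in\Omega_T$ and an ordered pair $ij$, $i\neq j$, let $x_{ij}(w)$ be the number of indices $1\le l\le T-1$ with $s_ls_{l+1}=ij$. Vectors of $\mathbb R^6$ are indexed in the order $[x_{12},x_{13},x_{21},x_{23},x_{31},x_{32}]$. Let $a_w=[x_{12}(w),\dots,x_{32}(w)]$ and $P^T=\mathrm{conv}\{a_w:w\in\Omega_T\}$. $\mathfrak S_3$ acts on $\mathbb R^6$ by $(\sigma c)_{ij}=c_{\sigma(i)\sigma(j)}$. A vector $c$ defines a facet of $P^T$ if $c\cdot a_w\ge0$ for all $w\in\Omega_T$ and $\{x\in P^T: c\cdot x=0\}$ is a facet of $P^T$. *)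

theory Defs
  imports "HOL-Analysis.Analysis" "HOL-Combinatorics.Permutations"
begin

datatype pidx = P12 | P13 | P21 | P23 | P31 | P32

lemma UNIV_pidx: "(UNIV :: pidx set) = {P12, P13, P21, P23, P31, P32}"
  using pidx.exhaust by auto

instance pidx :: finite
  by standard (simp add: UNIV_pidx)

fun pr :: "pidx \<Rightarrow> nat \<times> nat" where
  "pr P12 = (1,2)" | "pr P13 = (1,3)" | "pr P21 = (2,1)"
| "pr P23 = (2,3)" | "pr P31 = (3,1)" | "pr P32 = (3,2)"

text \<open>Words s_1 ... s_T over {1,2,3} with no two equal consecutive letters
  (stored 0-indexed as lists).\<close>
definition Omega :: "nat \<Rightarrow> nat list set" where
  "Omega T = {w. length w = T \<and> set w \<subseteq> {1,2,3} \<and>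
                 (\<forall>l. l + 1 < T \<longrightarrow> w ! l \<noteq> w ! (l + 1))}"

definition xcount :: "nat list \<Rightarrow> nat \<Rightarrow> nat \<Rightarrow> nat" where
  "xcount w i j = card {l. l + 1 < length w \<and> w ! l = i \<and> w ! (l + 1) = j}"

definition avec :: "nat list \<Rightarrow> real ^ pidx" where
  "avec w = (\<chi> k. real (xcount w (fst (pr k)) (snd (pr k))))"

definition PT :: "nat \<Rightarrow> (real ^ pidx) set" where
  "PT T = convex hull (avec ` Omega T)"

definition pact :: "(nat \<Rightarrow> nat) \<Rightarrow> real ^ pidx \<Rightarrow> real ^ pidx" where
  "pact \<sigma> c = (\<chi> k. c $ (THE k'. pr k' = (\<sigma> (fst (pr k)), \<sigma> (snd (pr k)))))"

definition defines_facet :: "nat \<Rightarrow> real ^ pidx \<Rightarrow> bool" where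
  "defines_facet T c \<longleftrightarrow>
     (\<forall>w \<in> Omega T. c \<bullet> avec w \<ge> 0) \<and> {x \<in> PT T. c \<bullet> x = 0} facet_of PT T"

definition cvec :: "nat \<Rightarrow> real ^ pidx" where
  "cvec T = (\<chi> k. case k of P12 \<Rightarrow> real T | P13 \<Rightarrow> real T | P21 \<Rightarrow> - (real T - 2)
                     | P23 \<Rightarrow> 1 | P31 \<Rightarrow> - (real T - 2) | P32 \<Rightarrow> 1)"

end

theory Submission
  imports Defs
begin

lemma xcount_Nil[simp]: "xcount [] i j = 0" by (simp add: xcount_def)
lemma xcount_single[simp]: "xcount [a] i j = 0" by (simp add: xcount_def)

lemma xcount_Cons2[simp]:
  "xcount (a#b#rest) i j = (if a=i \<and> b=j then 1 else 0) + xcount (b#rest) i j"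
proof -
  let ?S = "{l. l + 1 < length (b#rest) \<and> (b#rest) ! l = i \<and> (b#rest) ! (l + 1) = j}"
  have eq: "{l. l + 1 < length (a#b#rest) \<and> (a#b#rest) ! l = i \<and> (a#b#rest) ! (l + 1) = j}
      = (if a=i \<and> b=j then {0} else {}) \<union> Suc ` ?S"
    apply (rule set_eqI)
    subgoal for l by (cases l) auto
    done
  have "card ((if a=i \<and> b=j then {0} else {}) \<union> Suc ` ?S) = card (if a=i \<and> b=j then {0::nat} else {}) + card (Suc ` ?S)"
    by (rule card_Un_disjoint) auto
  also have "card (Suc ` ?S) = card ?S" by (simp add: card_image)
  finally show ?thesis unfolding xcount_def eq by simp
qed


lemma inout:
  assumes "w \<noteq> []" "set w \<subseteq> {1,2,3}" "r \<in> {1,2,3}"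
  shows "int (xcount w 1 r + xcount w 2 r + xcount w 3 r) - int (xcount w r 1 + xcount w r 2 + xcount w r 3)
     = (if last w = r then 1 else 0) - (if hd w = r then 1 else 0)"
  using assms
proof (induction w rule: induct_list012)
  case (3 a b rest)
  have IH: "int (xcount (b#rest) 1 r + xcount (b#rest) 2 r + xcount (b#rest) 3 r) - int (xcount (b#rest) r 1 + xcount (b#rest) r 2 + xcount (b#rest) r 3)
     = (if last (b#rest) = r then 1 else 0) - (if b = r then 1 else 0)"
    using 3 by simp
  have ha: "a = 1 \<or> a = 2 \<or> a = 3" and hb: "b = 1 \<or> b = 2 \<or> b = 3" using 3(4) by auto
  have hr: "r = 1 \<or> r = 2 \<or> r = 3" using 3(5) by auto
  show ?case using IH ha hb hr by (simp only: xcount_Cons2 last.simps list.sel list.distinct if_False) (elim disjE; simp)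
qed auto

lemma total:
  assumes "set w \<subseteq> {1,2,3}"
  shows "(\<Sum>i\<in>{1,2,3::nat}. \<Sum>j\<in>{1,2,3::nat}. xcount w i j) = length w - 1"
  using assms
proof (induction w rule: induct_list012)
  case (3 a b rest)
  have IH: "(\<Sum>i\<in>{1,2,3::nat}. \<Sum>j\<in>{1,2,3::nat}. xcount (b#rest) i j) = length rest"
    using 3 by simp
  have ha: "a = 1 \<or> a = 2 \<or> a = 3" and hb: "b = 1 \<or> b = 2 \<or> b = 3" using 3(3) by auto
  have "(\<Sum>i\<in>{1,2,3::nat}. \<Sum>j\<in>{1,2,3::nat}. xcount (a#b#rest) i j) =
     (\<Sum>i\<in>{1,2,3::nat}. \<Sum>j\<in>{1,2,3::nat}. (if a=i \<and> b=j then 1 else 0)) + (\<Sum>i\<in>{1,2,3::nat}. \<Sum>j\<in>{1,2,3::nat}. xcount (b#rest) i j)"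
    by (simp add: sum.distrib)
  also have "(\<Sum>i\<in>{1,2,3::nat}. \<Sum>j\<in>{1,2,3::nat}. (if a=i \<and> b=j then 1 else 0::nat)) = 1"
    using ha hb by (elim disjE; simp)
  finally show ?case using IH by simp
qed auto

lemma diag:
  assumes "successively (\<noteq>) w"
  shows "xcount w i i = 0"
  using assms
  by (induction w rule: induct_list012) auto

lemma Omega_iff: "w \<in> Omega T \<longleftrightarrow> length w = T \<and> set w \<subseteq> {1,2,3} \<and> successively (\<noteq>) w"
  unfolding Omega_def successively_conv_nth by auto


definition cr :: "nat \<Rightarrow> nat \<Rightarrow> real^pidx" where
  "cr T r = (\<chi> k. if fst (pr k) = r then real T else if snd (pr k) = r then - (real T - 2) else 1)"

lemma key_alg:
  fixes T ou i rest h l :: real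
  assumes "rest = T - 1 - ou - i" "i - ou = l - h"
  shows "T * ou + (-(T-2))*i + rest = (T-1)*(1+h-l)"
  using assms by algebra

lemma dot_formula:
  assumes w: "w \<in> Omega T" and T: "T \<ge> 1" and r: "r \<in> {1,2,3}"
  shows "cr T r \<bullet> avec w = (real T - 1) * (1 + (if hd w = r then 1 else 0) - (if last w = r then 1 else 0))"
proof -
  have len: "length w = T" and sw: "set w \<subseteq> {1,2,3}" and sc: "successively (\<noteq>) w"
    using w by (auto simp: Omega_iff)
  have ne: "w \<noteq> []" using len T by auto
  define X where "X i j = real (xcount w i j)" for i j
  have d: "X i i = 0" for i using diag[OF sc] by (simp add: X_def)
  have tot: "X 1 1 + X 1 2 + X 1 3 + X 2 1 + X 2 2 + X 2 3 + X 3 1 + X 3 2 + X 3 3 = real T - 1"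
  proof -
    have "real (\<Sum>i\<in>{1,2,3::nat}. \<Sum>j\<in>{1,2,3::nat}. xcount w i j) = real (length w - 1)"
      using total[OF sw] by simp
    then show ?thesis using len T by (simp add: X_def of_nat_diff)
  qed
  have io: "(X 1 r + X 2 r + X 3 r) - (X r 1 + X r 2 + X r 3) = (if last w = r then 1 else 0) - (if hd w = r then 1 else 0)"
  proof -
    have "real_of_int (int (xcount w 1 r + xcount w 2 r + xcount w 3 r) - int (xcount w r 1 + xcount w r 2 + xcount w r 3))
     = real_of_int ((if last w = r then 1 else 0) - (if hd w = r then 1 else 0))"
      using inout[OF ne sw r] by simp
    then show ?thesis by (simp add: X_def)
  qed
  have dot: "cr T r \<bullet> avec w = (\<Sum>k\<in>UNIV. cr T r $ k * avec w $ k)" by (simp add: inner_vec_def)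
  have hr: "r = 1 \<or> r = 2 \<or> r = 3" using r by auto
  show ?thesis
  proof (rule disjE[OF hr]; (elim disjE)?)
    assume "r = 1"
    then have "cr T r \<bullet> avec w = real T * (X 1 2 + X 1 3) + (-(real T - 2)) * (X 2 1 + X 3 1) + (X 2 3 + X 3 2)"
      unfolding dot by (simp add: UNIV_pidx cr_def avec_def X_def algebra_simps)
    also have "\<dots> = (real T - 1) * (1 + (if hd w = r then 1 else 0) - (if last w = r then 1 else 0))"
      by (rule key_alg) (use tot io d \<open>r = 1\<close> in simp_all)
    finally show ?thesis .
  next
    assume "r = 2"
    then have "cr T r \<bullet> avec w = real T * (X 2 1 + X 2 3) + (-(real T - 2)) * (X 1 2 + X 3 2) + (X 1 3 + X 3 1)"
      unfolding dot by (simp add: UNIV_pidx cr_def avec_def X_def algebra_simps)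
    also have "\<dots> = (real T - 1) * (1 + (if hd w = r then 1 else 0) - (if last w = r then 1 else 0))"
      by (rule key_alg) (use tot io d \<open>r = 2\<close> in simp_all)
    finally show ?thesis .
  next
    assume "r = 3"
    then have "cr T r \<bullet> avec w = real T * (X 3 1 + X 3 2) + (-(real T - 2)) * (X 1 3 + X 2 3) + (X 1 2 + X 2 1)"
      unfolding dot by (simp add: UNIV_pidx cr_def avec_def X_def algebra_simps)
    also have "\<dots> = (real T - 1) * (1 + (if hd w = r then 1 else 0) - (if last w = r then 1 else 0))"
      by (rule key_alg) (use tot io d \<open>r = 3\<close> in simp_all)
    finally show ?thesis .
  qed
qed


lemma pr_inj: "pr k1 = pr k2 \<Longrightarrow> k1 = k2"
  by (cases k1; cases k2; simp)

lemma pr_range: "fst (pr k) \<in> {1,2,3} \<and> snd (pr k) \<in> {1,2,3} \<and> fst (pr k) \<noteq> snd (pr k)"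
  by (cases k) auto

lemma pr_surj: "i \<in> {1,2,3} \<Longrightarrow> j \<in> {1,2,3} \<Longrightarrow> i \<noteq> j \<Longrightarrow> \<exists>k. pr k = (i,j)"
proof -
  assume a: "i \<in> {1,2,3}" "j \<in> {1,2,3}" "i \<noteq> j"
  have "(i,j) \<in> {(1,2),(1,3),(2,1),(2,3),(3,1),(3,2)}" using a by auto
  then show ?thesis by (auto intro: exI[of _ P12] exI[of _ P13] exI[of _ P21] exI[of _ P23] exI[of _ P31] exI[of _ P32])
qed

lemma pact_cr:
  assumes s: "\<sigma> permutes {1,2,3}" and r: "r \<in> {1,2,3}" "\<sigma> r = 1"
  shows "pact \<sigma> (cvec T) = cr T r"
proof -
  have cv: "cvec T = cr T 1"
    by (simp add: vec_eq_iff cr_def cvec_def; intro allI; case_tac i; simp)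
  show ?thesis
  proof (simp add: vec_eq_iff, intro allI)
    fix k
    obtain i j where ij: "pr k = (i,j)" by force
    have hij: "i \<in> {1,2,3}" "j \<in> {1,2,3}" "i \<noteq> j" using pr_range[of k] ij by auto
    have si: "\<sigma> i \<in> {1,2,3}" "\<sigma> j \<in> {1,2,3}" using hij permutes_in_image[OF s] by blast+
    have sij: "\<sigma> i \<noteq> \<sigma> j" using hij s by (metis permutes_inj injD)
    obtain k' where k': "pr k' = (\<sigma> i, \<sigma> j)" using pr_surj[OF si sij] by blast
    have the: "(THE k'. pr k' = (\<sigma> i, \<sigma> j)) = k'"
      using k' pr_inj by (intro the_equality) auto
    have e1: "\<sigma> i = 1 \<longleftrightarrow> i = r" using r s hij by (metis permutes_inj injD)
    have e2: "\<sigma> j = 1 \<longleftrightarrow> j = r" using r s hij by (metis permutes_inj injD)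
    show "pact \<sigma> (cvec T) $ k = cr T r $ k"
      unfolding pact_def cv using the k' ij e1 e2 by (simp add: cr_def)
  qed
qed


definition ind :: "nat \<Rightarrow> nat \<Rightarrow> real^pidx" where
  "ind a b = (\<chi> k. if pr k = (a,b) then 1 else 0)"

lemma ind_at: "pr k = (i,j) \<Longrightarrow> ind a b $ k = (if a = i \<and> b = j then 1 else 0)"
  by (auto simp: ind_def)

lemma indep5:
  assumes d: "p \<in> {1,2,3}" "q \<in> {1,2,3}" "r \<in> {1,2,3}" "p \<noteq> q" "p \<noteq> r" "q \<noteq> r"
  defines "uA \<equiv> ind p r + ind r q + ind q p"
    and "uB \<equiv> ind p q + ind q r + ind r p"
    and "uC \<equiv> ind q r + ind r q + ind q p"
    and "uD \<equiv> ind q p + ind p r + ind r p"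
    and "uE \<equiv> ind q p + ind p q + ind q p"
  shows "aff_dim {uA, uB, uC, uD, uE} = 4"
proof -
  obtain k1 where k1: "pr k1 = (p,r)" using pr_surj d by blast
  obtain k2 where k2: "pr k2 = (r,q)" using pr_surj d by metis
  obtain k3 where k3: "pr k3 = (q,p)" using pr_surj d by metis
  obtain k4 where k4: "pr k4 = (p,q)" using pr_surj d by metis
  obtain k5 where k5: "pr k5 = (q,r)" using pr_surj d by metis
  obtain k6 where k6: "pr k6 = (r,p)" using pr_surj d by metis
  note vals = ind_at[OF k1] ind_at[OF k2] ind_at[OF k3] ind_at[OF k4] ind_at[OF k5] ind_at[OF k6]
  have A: "uA $ k1 = 1" "uA $ k2 = 1" "uA $ k3 = 1" "uA $ k4 = 0" "uA $ k5 = 0" "uA $ k6 = 0"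
    unfolding uA_def using d by (simp_all add: vals)
  have B: "uB $ k1 = 0" "uB $ k2 = 0" "uB $ k3 = 0" "uB $ k4 = 1" "uB $ k5 = 1" "uB $ k6 = 1"
    unfolding uB_def using d by (simp_all add: vals)
  have C: "uC $ k1 = 0" "uC $ k2 = 1" "uC $ k3 = 1" "uC $ k4 = 0" "uC $ k5 = 1" "uC $ k6 = 0"
    unfolding uC_def using d by (simp_all add: vals)
  have D: "uD $ k1 = 1" "uD $ k2 = 0" "uD $ k3 = 1" "uD $ k4 = 0" "uD $ k5 = 0" "uD $ k6 = 1"
    unfolding uD_def using d by (simp_all add: vals)
  have E: "uE $ k1 = 0" "uE $ k2 = 0" "uE $ k3 = 2" "uE $ k4 = 1" "uE $ k5 = 0" "uE $ k6 = 0"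
    unfolding uE_def using d by (simp_all add: vals)
  have ne: "uA \<noteq> uB" "uA \<noteq> uC" "uA \<noteq> uD" "uA \<noteq> uE" "uB \<noteq> uC" "uB \<noteq> uD" "uB \<noteq> uE"
     "uC \<noteq> uD" "uC \<noteq> uE" "uD \<noteq> uE"
    using A B C D E by (metis zero_neq_one one_neq_zero)+
  let ?S = "{uA, uB, uC, uD, uE}"
  have nd: "\<not> affine_dependent ?S"
  proof
    assume "affine_dependent ?S"
    then obtain U where U1: "sum U ?S = 0" and U2: "\<exists>v\<in>?S. U v \<noteq> 0" and U3: "(\<Sum>v\<in>?S. U v *\<^sub>R v) = 0"
      by (auto simp: affine_dependent_explicit_finite)
    have s1: "U uA + U uB + U uC + U uD + U uE = 0" using U1 ne by simp
    have c: "(\<Sum>v\<in>?S. U v *\<^sub>R v) $ k = 0" for k using U3 by simp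
    have cc: "U uA * uA $ k + U uB * uB $ k + U uC * uC $ k + U uD * uD $ k + U uE * uE $ k = 0" for k
      using c[of k] ne by simp
    have e1: "U uA + U uD = 0" using cc[of k1] A B C D E by simp
    have e2: "U uA + U uC = 0" using cc[of k2] A B C D E by simp
    have e3: "U uA + U uC + U uD + 2 * U uE = 0" using cc[of k3] A B C D E by simp
    have e4: "U uB + U uE = 0" using cc[of k4] A B C D E by simp
    have e5: "U uB + U uC = 0" using cc[of k5] A B C D E by simp
    have e6: "U uB + U uD = 0" using cc[of k6] A B C D E by simp
    have "U uA = 0" "U uB = 0" "U uC = 0" "U uD = 0" "U uE = 0" using e1 e2 e3 e4 e5 e6 s1 by linarith+
    then show False using U2 by auto
  qed
  have "card ?S = 5" using ne by simp
  then show ?thesis using aff_dim_affine_independent[OF nd] by simp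
qed


fun alt :: "nat \<Rightarrow> nat \<Rightarrow> nat \<Rightarrow> nat list" where
  "alt p q 0 = []"
| "alt p q (Suc n) = p # alt q p n"

lemma alt_len[simp]: "length (alt p q n) = n"
  by (induction n arbitrary: p q) auto

lemma alt_set: "set (alt p q n) \<subseteq> {p,q}"
  by (induction n arbitrary: p q) auto

lemma alt_succ: "p \<noteq> q \<Longrightarrow> r \<noteq> p \<Longrightarrow> r \<noteq> q \<Longrightarrow> successively (\<noteq>) (alt p q n @ [r])"
proof (induction n arbitrary: p q)
  case (Suc n)
  then show ?case by (cases n) (auto simp: successively_Cons)
qed auto

lemma avec_Cons2: "avec (a # b # rest) = ind a b + avec (b # rest)"
  by (simp add: vec_eq_iff avec_def ind_def)

lemma avec_word:
  assumes "n \<ge> 1"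
  shows "avec (a # b # c # alt p q n @ [r]) = ind a b + ind b c + ind c p + avec (alt p q n @ [r])"
proof -
  obtain m where n: "n = Suc m" using assms by (cases n) auto
  show ?thesis unfolding n by (simp add: avec_Cons2 add.assoc)
qed

lemma word_in:
  assumes T: "T \<ge> 5" and d: "p \<in> {1,2,3}" "q \<in> {1,2,3}" "r \<in> {1,2,3}" "p \<noteq> q" "p \<noteq> r" "q \<noteq> r"
    and abc: "a \<in> {1,2,3}" "b \<in> {1,2,3}" "c \<in> {1,2,3}" "a \<noteq> b" "b \<noteq> c" "c \<noteq> p"
  shows "a # b # c # alt p q (T - 4) @ [r] \<in> Omega T"
proof -
  obtain m where m: "T - 4 = Suc m" using T by (cases "T - 4") auto
  have "successively (\<noteq>) (alt p q (T-4) @ [r])" using alt_succ d by auto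
  then have "successively (\<noteq>) (a # b # c # alt p q (T - 4) @ [r])"
    using abc m by (simp add: successively_Cons)
  moreover have "set (alt p q (T-4)) \<subseteq> {1,2,3}" using alt_set d by blast
  ultimately show ?thesis using T abc d by (auto simp: Omega_iff)
qed


lemma one_dot:
  assumes w: "w \<in> Omega T" and T: "T \<ge> 1"
  shows "((\<chi> k. 1) :: real^pidx) \<bullet> avec w = real T - 1"
proof -
  have len: "length w = T" and sw: "set w \<subseteq> {1,2,3}" and sc: "successively (\<noteq>) w"
    using w by (auto simp: Omega_iff)
  have d: "xcount w i i = 0" for i using diag[OF sc] .
  have "real (\<Sum>i\<in>{1,2,3::nat}. \<Sum>j\<in>{1,2,3::nat}. xcount w i j) = real (length w - 1)"
    using total[OF sw] by simp
  then show ?thesis using len T d by (simp add: inner_vec_def UNIV_pidx avec_def of_nat_diff)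
qed

lemma facet_cr:
  assumes T: "T \<ge> 5" and d: "p \<in> {1,2,3}" "q \<in> {1,2,3}" "r \<in> {1,2,3}" "p \<noteq> q" "p \<noteq> r" "q \<noteq> r"
  shows "defines_facet T (cr T r)"
proof -
  let ?c = "cr T r"
  define F where "F = alt p q (T - 4) @ [r]"
  define K where "K = avec F"
  have n1: "T - 4 \<ge> 1" using T by simp
  have nonneg: "\<forall>w \<in> Omega T. ?c \<bullet> avec w \<ge> 0"
  proof
    fix w assume "w \<in> Omega T"
    then show "?c \<bullet> avec w \<ge> 0" using dot_formula[of w T r] T d by auto
  qed
  have cvx: "convex (PT T)" unfolding PT_def by simp
  have PTge: "\<And>x. x \<in> PT T \<Longrightarrow> ?c \<bullet> x \<ge> 0"
  proof -
    have "PT T \<subseteq> {x. ?c \<bullet> x \<ge> 0}"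
      unfolding PT_def using nonneg by (intro hull_minimal) (auto simp: convex_halfspace_ge)
    then show "\<And>x. x \<in> PT T \<Longrightarrow> ?c \<bullet> x \<ge> 0" by blast
  qed
  have Feq: "{x \<in> PT T. ?c \<bullet> x = 0} = PT T \<inter> {x. ?c \<bullet> x = 0}" by blast
  have face: "{x \<in> PT T. ?c \<bullet> x = 0} face_of PT T"
    unfolding Feq by (rule face_of_Int_supporting_hyperplane_ge[OF cvx]) (use PTge in auto)
  have inPT: "w \<in> Omega T \<Longrightarrow> avec w \<in> PT T" for w unfolding PT_def by (simp add: hull_inc)
  have wz: "avec (a # b # c # F) \<in> {x \<in> PT T. ?c \<bullet> x = 0}"
    if "a \<in> {1,2,3}" "b \<in> {1,2,3}" "c \<in> {1,2,3}" "a \<noteq> b" "b \<noteq> c" "c \<noteq> p" "a \<noteq> r" for a b c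
  proof -
    have w: "a # b # c # F \<in> Omega T" unfolding F_def using word_in[OF T d] that by simp
    have "?c \<bullet> avec (a # b # c # F) = 0" using dot_formula[OF w _ d(3)] T that by (simp add: F_def)
    then show ?thesis using inPT[OF w] by simp
  qed
  have av: "avec (a # b # c # F) = (ind a b + ind b c + ind c p) + K" for a b c
    unfolding F_def K_def using avec_word[OF n1] by simp
  have wN: "r # q # r # F \<in> Omega T" unfolding F_def using word_in[OF T d] d by simp
  have posN: "?c \<bullet> avec (r # q # r # F) > 0" using dot_formula[OF wN _ d(3)] T by (simp add: F_def)
  have neq: "{x \<in> PT T. ?c \<bullet> x = 0} \<noteq> PT T"
  proof
    assume e: "{x \<in> PT T. ?c \<bullet> x = 0} = PT T"
    have "avec (r # q # r # F) \<in> {x \<in> PT T. ?c \<bullet> x = 0}" using inPT[OF wN] e by simp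
    then show False using posN by simp
  qed
  have lt: "aff_dim {x \<in> PT T. ?c \<bullet> x = 0} < aff_dim (PT T)"
    by (rule face_of_aff_dim_lt[OF cvx face neq])
  have ub: "aff_dim (PT T) \<le> 5"
  proof -
    have "PT T \<subseteq> {x. ((\<chi> k. 1) :: real^pidx) \<bullet> x = real T - 1}"
      unfolding PT_def
    proof (rule hull_minimal)
      show "avec ` Omega T \<subseteq> {x. ((\<chi> k. 1) :: real^pidx) \<bullet> x = real T - 1}"
      proof
        fix x assume "x \<in> avec ` Omega T"
        then obtain w where "w \<in> Omega T" "x = avec w" by blast
        then show "x \<in> {x. ((\<chi> k. 1) :: real^pidx) \<bullet> x = real T - 1}" using one_dot[of w T] T by simp
      qed
      show "convex {x. ((\<chi> k. 1) :: real^pidx) \<bullet> x = real T - 1}" by (rule convex_hyperplane)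
    qed
    then have "aff_dim (PT T) \<le> aff_dim {x. ((\<chi> k. 1) :: real^pidx) \<bullet> x = real T - 1}" by (rule aff_dim_subset)
    also have "\<dots> = 5"
    proof -
      have "((\<chi> k. 1) :: real^pidx) \<noteq> 0" by (simp add: vec_eq_iff)
      then show ?thesis by (simp add: UNIV_pidx)
    qed
    finally show ?thesis .
  qed
  let ?S0 = "{ind p r + ind r q + ind q p, ind p q + ind q r + ind r p, ind q r + ind r q + ind q p,
              ind q p + ind p r + ind r p, ind q p + ind p q + ind q p}"
  have S0: "aff_dim ?S0 = 4" using indep5[OF d] by simp
  have sub: "(+) K ` ?S0 \<subseteq> {x \<in> PT T. ?c \<bullet> x = 0}"
  proof -
    have "avec (p # r # q # F) \<in> {x \<in> PT T. ?c \<bullet> x = 0}" by (rule wz) (use d in auto)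
    moreover have "avec (p # q # r # F) \<in> {x \<in> PT T. ?c \<bullet> x = 0}" by (rule wz) (use d in auto)
    moreover have "avec (q # r # q # F) \<in> {x \<in> PT T. ?c \<bullet> x = 0}" by (rule wz) (use d in auto)
    moreover have "avec (q # p # r # F) \<in> {x \<in> PT T. ?c \<bullet> x = 0}" by (rule wz) (use d in auto)
    moreover have "avec (q # p # q # F) \<in> {x \<in> PT T. ?c \<bullet> x = 0}" by (rule wz) (use d in auto)
    ultimately show ?thesis unfolding av by (simp add: add.commute)
  qed
  have lb: "aff_dim {x \<in> PT T. ?c \<bullet> x = 0} \<ge> 4"
    using aff_dim_subset[OF sub] S0 aff_dim_translation_eq[of K ?S0] by simp
  have ne: "{x \<in> PT T. ?c \<bullet> x = 0} \<noteq> {}" using sub by auto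
  have ad: "aff_dim {x \<in> PT T. ?c \<bullet> x = 0} = aff_dim (PT T) - 1" using lt ub lb by linarith
  show ?thesis unfolding defines_facet_def facet_of_def
    using nonneg face ne ad by blast
qed

theorem proposition6:
  fixes T :: nat and \<sigma> :: "nat \<Rightarrow> nat"
  assumes "T \<ge> 5" and "\<sigma> permutes {1, 2, 3}"
  shows "defines_facet T (pact \<sigma> (cvec T))"
proof -
  have im: "\<sigma> ` {1,2,3} = {1,2,3}" by (rule permutes_image[OF assms(2)])
  have "(1::nat) \<in> \<sigma> ` {1,2,3}" unfolding im by simp
  then obtain r where r: "r \<in> {1,2,3}" "\<sigma> r = 1" by (rule imageE) auto
  have eq: "pact \<sigma> (cvec T) = cr T r" by (rule pact_cr[OF assms(2) r])
  have "defines_facet T (cr T r)"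
  proof -
    have "r = 1 \<or> r = 2 \<or> r = 3" using r by auto
    then show ?thesis
    proof (elim disjE)
      assume "r = 1" then show ?thesis by (simp only:) (rule facet_cr[OF assms(1), of 2 3]; simp)
    next
      assume "r = 2" then show ?thesis by (simp only:) (rule facet_cr[OF assms(1), of 1 3]; simp)
    next
      assume "r = 3" then show ?thesis by (simp only:) (rule facet_cr[OF assms(1), of 1 2]; simp)
    qed
  qed
  then show ?thesis unfolding eq .
qed

end
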